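(* Let $P.\phi$ be a DQBF with prefix $P=\forall x_1,\dots,x_n\,\exists y_1(D_1),\dots,y_k(D_k)$ and let $G_{\mathrm{syn}}$ be an admissible group w.r.t. $P$. Then for every $g\in G_{\mathrm{syn}}$ and every $s\in\mathcal S(P)$, $[P.g(\phi)]_s=[P.\phi]_{g(s)}$. In particular, $P.\phi$ is true if and only if $P.g(\phi)$ is true, and $s$ is a model of $P.g(\phi)$ if and only if $g(s)$ is a model of $P.\phi$.
   Context: $X=\{x_1,\dots,x_n\}$, $Y=\{y_1,\dots,y_k\}$ are finite disjoint sets of propositional variables; $\operatorname{BF}(V)$ is the set of propositional formulas over $V\subseteq X\cup Y$; $\mathcal A(V)$ the set of assignments $V\to\{\top,\bot\}$, $[\phi]_\sigma$ the truth value. The prefix has dependency sets $D_j\subseteq X$; $\phi\in\operatorname{BF}(X\cup Y)$. An interpretation is $s=(s_1,\dots,s_k)$ with $s_j:\{\top,\bot\}^{|D_j|}\to\{\top,\bot\}$; $\mathcal S(P)$ is the set of interpretations. For $\sigma\in\mathcal A(X)$, $\sigma_s\in\mathcal A(X\cup Y)$ equals $\sigma$ on $X$ and $\sigma_s(y_j)=s_j$ evaluated at $\sigma$'s values on $D_j$. $[P.\phi]_s=\bigwedge_{\sigma\in\mathcal A(X)}[\phi]_{\sigma_s}$; $P.\phi$ is true if some $s$ gives $\top$, and such $s$ is a model. For $g:\operatorname{BF}(V)\to\operatorname{BF}(V)$ and $\sigma\in\mathcal A(V)$, $g(\sigma)(v)=[g(v)]_\sigma$; $g$ preserves propositional satisfiability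 if $[g(\phi)]_\sigma=[\phi]_{g(\sigma)}$ always. A formula in $\operatorname{BF}(Y)$ depends on $x_i$ if it contains some $y_j$ with $x_i\in D_j$. A bijection $g$ of $\operatorname{BF}(X\cup Y)$ is admissible w.r.t. $P$ if it preserves propositional satisfiability, $g(x_i)\in\operatorname{BF}(X)$, $g(y_j)\in\operatorname{BF}(Y)$, and if $g(y_j)$ depends on $x_i$ then $g^{-1}(x_i)\in\operatorname{BF}(D_j)$. An admissible group is a subgroup of the group of all admissible functions. For admissible $g$ and $\sigma\in\mathcal A(X)$, $g(\sigma)\in\mathcal A(X)$ is $g(\sigma)(x)=[g(x)]_\sigma$. For $g\in G_{\mathrm{syn}}$ and $s\in\mathcal S(P)$, $g(s)\in\mathcal S(P)$ is the (well-defined) interpretation $t$ with $\sigma_t=g(g^{-1}(\sigma)_s)$ for all $\sigma\in\mathcal A(X)$. *)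

theory Defs
  imports Main
begin

datatype 'v form = Var 'v | Const bool | Neg "'v form"
  | Conj "'v form" "'v form" | Disj "'v form" "'v form"

primrec vars :: "'v form \<Rightarrow> 'v set" where
  "vars (Var v) = {v}"
| "vars (Const b) = {}"
| "vars (Neg p) = vars p"
| "vars (Conj p q) = vars p \<union> vars q"
| "vars (Disj p q) = vars p \<union> vars q"

primrec eval :: "('v \<Rightarrow> bool) \<Rightarrow> 'v form \<Rightarrow> bool" where
  "eval \<sigma> (Var v) = \<sigma> v"
| "eval \<sigma> (Const b) = b"
| "eval \<sigma> (Neg p) = (\<not> eval \<sigma> p)"
| "eval \<sigma> (Conj p q) = (eval \<sigma> p \<and> eval \<sigma> q)"
| "eval \<sigma> (Disj p q) = (eval \<sigma> p \<or> eval \<sigma> q)"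

definition BF :: "'v set \<Rightarrow> 'v form set" where
  "BF V = {\<phi>. vars \<phi> \<subseteq> V}"

definition prefix :: "'v set \<Rightarrow> 'v set \<Rightarrow> ('v \<Rightarrow> 'v set) \<Rightarrow> bool" where
  "prefix X Y D \<longleftrightarrow> finite X \<and> finite Y \<and> X \<inter> Y = {} \<and> (\<forall>y\<in>Y. D y \<subseteq> X)"

text \<open>Interpretations: s y is a Skolem function for y which depends only on the
  values of the universal variables in D y.\<close>
definition interp :: "'v set \<Rightarrow> ('v \<Rightarrow> 'v set) \<Rightarrow> ('v \<Rightarrow> ('v \<Rightarrow> bool) \<Rightarrow> bool) \<Rightarrow> bool" where
  "interp Y D s \<longleftrightarrow>
     (\<forall>y\<in>Y. \<forall>\<sigma> \<sigma>'. (\<forall>x\<in>D y. \<sigma> x = \<sigma>' x) \<longrightarrow> s y \<sigma> = s y \<sigma>')"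

definition ext :: "'v set \<Rightarrow> ('v \<Rightarrow> ('v \<Rightarrow> bool) \<Rightarrow> bool) \<Rightarrow> ('v \<Rightarrow> bool) \<Rightarrow> 'v \<Rightarrow> bool" where
  "ext Y s \<sigma> = (\<lambda>v. if v \<in> Y then s v \<sigma> else \<sigma> v)"

definition dqbf_val :: "'v set \<Rightarrow> ('v \<Rightarrow> ('v \<Rightarrow> bool) \<Rightarrow> bool) \<Rightarrow> 'v form \<Rightarrow> bool" where
  "dqbf_val Y s \<phi> \<longleftrightarrow> (\<forall>\<sigma>. eval (ext Y s \<sigma>) \<phi>)"

definition is_model :: "'v set \<Rightarrow> ('v \<Rightarrow> 'v set) \<Rightarrow> 'v form \<Rightarrow> ('v \<Rightarrow> ('v \<Rightarrow> bool) \<Rightarrow> bool) \<Rightarrow> bool" where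
  "is_model Y D \<phi> s \<longleftrightarrow> interp Y D s \<and> dqbf_val Y s \<phi>"

definition dqbf_true :: "'v set \<Rightarrow> ('v \<Rightarrow> 'v set) \<Rightarrow> 'v form \<Rightarrow> bool" where
  "dqbf_true Y D \<phi> \<longleftrightarrow> (\<exists>s. is_model Y D \<phi> s)"

definition asg :: "('v form \<Rightarrow> 'v form) \<Rightarrow> ('v \<Rightarrow> bool) \<Rightarrow> 'v \<Rightarrow> bool" where
  "asg g \<sigma> = (\<lambda>v. eval \<sigma> (g (Var v)))"

definition preserves_sat :: "'v set \<Rightarrow> ('v form \<Rightarrow> 'v form) \<Rightarrow> bool" where
  "preserves_sat V g \<longleftrightarrow> (\<forall>\<phi>\<in>BF V. \<forall>\<sigma>. eval \<sigma> (g \<phi>) = eval (asg g \<sigma>) \<phi>)"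

definition depends :: "'v set \<Rightarrow> ('v \<Rightarrow> 'v set) \<Rightarrow> 'v form \<Rightarrow> 'v \<Rightarrow> bool" where
  "depends Y D \<psi> x \<longleftrightarrow> (\<exists>y\<in>vars \<psi> \<inter> Y. x \<in> D y)"

definition ginv :: "'v set \<Rightarrow> 'v set \<Rightarrow> ('v form \<Rightarrow> 'v form) \<Rightarrow> 'v form \<Rightarrow> 'v form" where
  "ginv X Y g = inv_into (BF (X \<union> Y)) g"

definition admissible :: "'v set \<Rightarrow> 'v set \<Rightarrow> ('v \<Rightarrow> 'v set) \<Rightarrow> ('v form \<Rightarrow> 'v form) \<Rightarrow> bool" where
  "admissible X Y D g \<longleftrightarrow>
     bij_betw g (BF (X \<union> Y)) (BF (X \<union> Y)) \<and>
     preserves_sat (X \<union> Y) g \<and>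
     (\<forall>x\<in>X. g (Var x) \<in> BF X) \<and>
     (\<forall>y\<in>Y. g (Var y) \<in> BF Y) \<and>
     (\<forall>y\<in>Y. \<forall>x\<in>X. depends Y D (g (Var y)) x \<longrightarrow> ginv X Y g (Var x) \<in> BF (D y))"

text \<open>Maps are total functions on formulas; only their restriction to
  BF(X \<union> Y) matters, so group axioms are stated up to agreement on BF(X \<union> Y).\<close>
definition admissible_group :: "'v set \<Rightarrow> 'v set \<Rightarrow> ('v \<Rightarrow> 'v set) \<Rightarrow> ('v form \<Rightarrow> 'v form) set \<Rightarrow> bool" where
  "admissible_group X Y D G \<longleftrightarrow>
     (\<forall>g\<in>G. admissible X Y D g) \<and>
     (\<exists>e\<in>G. \<forall>\<phi>\<in>BF (X \<union> Y). e \<phi> = \<phi>) \<and>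
     (\<forall>g\<in>G. \<forall>h\<in>G. \<exists>k\<in>G. \<forall>\<phi>\<in>BF (X \<union> Y). k \<phi> = g (h \<phi>)) \<and>
     (\<forall>g\<in>G. \<exists>h\<in>G. \<forall>\<phi>\<in>BF (X \<union> Y). h (g \<phi>) = \<phi> \<and> g (h \<phi>) = \<phi>)"

text \<open>The action g(s): the interpretation t with \<sigma>_t = g(g^{-1}(\<sigma>)_s), i.e.
  t y \<sigma> = [g(y)]_{g^{-1}(\<sigma>)_s}.\<close>
definition act :: "'v set \<Rightarrow> 'v set \<Rightarrow> ('v form \<Rightarrow> 'v form)
    \<Rightarrow> ('v \<Rightarrow> ('v \<Rightarrow> bool) \<Rightarrow> bool) \<Rightarrow> ('v \<Rightarrow> ('v \<Rightarrow> bool) \<Rightarrow> bool)" where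
  "act X Y g s = (\<lambda>y \<sigma>. eval (ext Y s (asg (ginv X Y g) \<sigma>)) (g (Var y)))"

end

theory Submission
  imports Defs
begin

lemma eval_cong: "(\<And>v. v \<in> vars \<phi> \<Longrightarrow> \<sigma> v = \<sigma>' v) \<Longrightarrow> eval \<sigma> \<phi> = eval \<sigma>' \<phi>"
  by (induction \<phi>) auto

lemma eval_cong_BF: "\<phi> \<in> BF V \<Longrightarrow> (\<And>v. v \<in> V \<Longrightarrow> \<sigma> v = \<sigma>' v) \<Longrightarrow> eval \<sigma> \<phi> = eval \<sigma>' \<phi>"
  unfolding BF_def by (rule eval_cong) auto

lemma Var_BF: "v \<in> V \<Longrightarrow> Var v \<in> BF V"
  unfolding BF_def by simp

lemma main:
  assumes pre: "prefix X Y D" and ag: "admissible X Y D g" and ah: "admissible X Y D h"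
    and hg: "\<forall>\<phi>\<in>BF (X \<union> Y). h (g \<phi>) = \<phi> \<and> g (h \<phi>) = \<phi>"
    and s: "interp Y D s" and phi: "\<phi> \<in> BF (X \<union> Y)"
  shows "dqbf_val Y s (g \<phi>) = dqbf_val Y (act X Y g s) \<phi>"
    and "interp Y D (act X Y g s)"
proof -
  let ?V = "X \<union> Y"
  let ?gi = "ginv X Y g"
  let ?t = "act X Y g s"
  have disj: "X \<inter> Y = {}" and DX: "\<And>y. y \<in> Y \<Longrightarrow> D y \<subseteq> X"
    using pre unfolding prefix_def by auto
  have psg: "\<And>\<psi> \<sigma>. \<psi> \<in> BF ?V \<Longrightarrow> eval \<sigma> (g \<psi>) = eval (asg g \<sigma>) \<psi>"
    using ag unfolding admissible_def preserves_sat_def by blast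
  have psh: "\<And>\<psi> \<sigma>. \<psi> \<in> BF ?V \<Longrightarrow> eval \<sigma> (h \<psi>) = eval (asg h \<sigma>) \<psi>"
    using ah unfolding admissible_def preserves_sat_def by blast
  have gX: "\<And>x. x \<in> X \<Longrightarrow> g (Var x) \<in> BF X" and gY: "\<And>y. y \<in> Y \<Longrightarrow> g (Var y) \<in> BF Y"
    using ag unfolding admissible_def by auto
  have dep: "\<And>y x. y \<in> Y \<Longrightarrow> x \<in> X \<Longrightarrow> depends Y D (g (Var y)) x \<Longrightarrow> ?gi (Var x) \<in> BF (D y)"
    using ag unfolding admissible_def by auto
  have bg: "bij_betw g (BF ?V) (BF ?V)" and bh: "bij_betw h (BF ?V) (BF ?V)"
    using ag ah unfolding admissible_def by auto
  have BFmono: "\<And>A B \<psi>. A \<subseteq> B \<Longrightarrow> \<psi> \<in> BF A \<Longrightarrow> \<psi> \<in> BF B"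
    unfolding BF_def by auto
  have ginv_eq: "\<And>\<psi>. \<psi> \<in> BF ?V \<Longrightarrow> ?gi \<psi> = h \<psi>"
  proof -
    fix \<psi> assume a: "\<psi> \<in> BF ?V"
    have hin: "h \<psi> \<in> BF ?V" using bh a by (meson bij_betw_apply)
    have "?gi \<psi> = inv_into (BF ?V) g (g (h \<psi>))" using hg a by (simp add: ginv_def)
    also have "\<dots> = h \<psi>" using bg hin by (simp add: bij_betw_def)
    finally show "?gi \<psi> = h \<psi>" .
  qed
  have A1: "\<And>v \<tau>. v \<in> ?V \<Longrightarrow> asg ?gi \<tau> v = asg h \<tau> v"
    unfolding asg_def using ginv_eq Var_BF by (metis UnCI Un_iff)
  have A2: "\<And>v \<sigma>. v \<in> ?V \<Longrightarrow> asg h (asg g \<sigma>) v = \<sigma> v"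
  proof -
    fix v \<sigma> assume v: "v \<in> ?V"
    have "asg h (asg g \<sigma>) v = eval (asg g \<sigma>) (h (Var v))" by (simp add: asg_def)
    also have "\<dots> = eval \<sigma> (g (h (Var v)))"
      using psg bh Var_BF[OF v] by (metis bij_betw_apply)
    also have "\<dots> = \<sigma> v" using hg Var_BF[OF v] by simp
    finally show "asg h (asg g \<sigma>) v = \<sigma> v" .
  qed
  have A3: "\<And>v \<tau>. v \<in> ?V \<Longrightarrow> asg g (asg h \<tau>) v = \<tau> v"
  proof -
    fix v \<tau> assume v: "v \<in> ?V"
    have "asg g (asg h \<tau>) v = eval (asg h \<tau>) (g (Var v))" by (simp add: asg_def)
    also have "\<dots> = eval \<tau> (h (g (Var v)))"
      using psh bg Var_BF[OF v] by (metis bij_betw_apply)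
    also have "\<dots> = \<tau> v" using hg Var_BF[OF v] by simp
    finally show "asg g (asg h \<tau>) v = \<tau> v" .
  qed
  have extc: "\<And>(\<sigma>::'a \<Rightarrow> bool) \<sigma>' v. (\<And>x. x \<in> X \<Longrightarrow> \<sigma> x = \<sigma>' x) \<Longrightarrow> v \<in> ?V \<Longrightarrow> ext Y s \<sigma> v = ext Y s \<sigma>' v"
  proof -
    fix \<sigma> \<sigma>' :: "'a \<Rightarrow> bool" and v assume ag': "\<And>x. x \<in> X \<Longrightarrow> \<sigma> x = \<sigma>' x" and v: "v \<in> ?V"
    show "ext Y s \<sigma> v = ext Y s \<sigma>' v"
    proof (cases "v \<in> Y")
      case True
      then have "s v \<sigma> = s v \<sigma>'" using s DX ag' unfolding interp_def by blast
      then show ?thesis using True by (simp add: ext_def)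
    next
      case False then show ?thesis using v ag' by (simp add: ext_def)
    qed
  qed
  have extX: "\<And>\<sigma> x. x \<in> X \<Longrightarrow> ext Y s \<sigma> x = \<sigma> x"
    using disj by (auto simp: ext_def)
  have gXeval: "\<And>\<sigma> x. x \<in> X \<Longrightarrow> eval (ext Y s \<sigma>) (g (Var x)) = eval \<sigma> (g (Var x))"
    using eval_cong_BF[OF gX] extX by metis
  show "dqbf_val Y s (g \<phi>) = dqbf_val Y ?t \<phi>"
  proof
    assume H: "dqbf_val Y ?t \<phi>"
    show "dqbf_val Y s (g \<phi>)" unfolding dqbf_val_def
    proof
      fix \<sigma>
      let ?\<tau> = "asg g \<sigma>"
      have agr: "\<And>v. v \<in> ?V \<Longrightarrow> asg g (ext Y s \<sigma>) v = ext Y ?t ?\<tau> v"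
      proof -
        fix v assume v: "v \<in> ?V"
        show "asg g (ext Y s \<sigma>) v = ext Y ?t ?\<tau> v"
        proof (cases "v \<in> Y")
          case True
          have "eval (ext Y s \<sigma>) (g (Var v)) = eval (ext Y s (asg ?gi ?\<tau>)) (g (Var v))"
            apply (rule eval_cong_BF[OF BFmono[OF _ gY[OF True]], of ?V])
             apply simp
            apply (rule extc)
             apply (metis A1 A2 UnI1)
            by simp
          then show ?thesis using True by (simp add: asg_def ext_def act_def)
        next
          case False
          then have "v \<in> X" using v by simp
          then show ?thesis using False gXeval by (simp add: asg_def ext_def)
        qed
      qed
      have "eval (ext Y ?t ?\<tau>) \<phi>" using H unfolding dqbf_val_def by blast
      then have "eval (asg g (ext Y s \<sigma>)) \<phi>" using eval_cong_BF[OF phi] agr by metis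
      then show "eval (ext Y s \<sigma>) (g \<phi>)" using psg[OF phi] by simp
    qed
  next
    assume H: "dqbf_val Y s (g \<phi>)"
    show "dqbf_val Y ?t \<phi>" unfolding dqbf_val_def
    proof
      fix \<tau>
      let ?\<sigma> = "asg h \<tau>"
      have agr: "\<And>v. v \<in> ?V \<Longrightarrow> asg g (ext Y s ?\<sigma>) v = ext Y ?t \<tau> v"
      proof -
        fix v assume v: "v \<in> ?V"
        show "asg g (ext Y s ?\<sigma>) v = ext Y ?t \<tau> v"
        proof (cases "v \<in> Y")
          case True
          have "eval (ext Y s ?\<sigma>) (g (Var v)) = eval (ext Y s (asg ?gi \<tau>)) (g (Var v))"
            apply (rule eval_cong_BF[OF BFmono[OF _ gY[OF True]], of ?V])
             apply simp
            apply (rule extc)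
             apply (metis A1 UnI1)
            by simp
          then show ?thesis using True by (simp add: asg_def ext_def act_def)
        next
          case False
          then have vX: "v \<in> X" using v by simp
          have "asg g (ext Y s ?\<sigma>) v = asg g ?\<sigma> v" using gXeval[OF vX] by (simp add: asg_def)
          also have "\<dots> = \<tau> v" using A3 v by simp
          finally show ?thesis using False by (simp add: ext_def)
        qed
      qed
      have "eval (ext Y s ?\<sigma>) (g \<phi>)" using H unfolding dqbf_val_def by blast
      then have "eval (asg g (ext Y s ?\<sigma>)) \<phi>" using psg[OF phi] by simp
      then show "eval (ext Y ?t \<tau>) \<phi>" using eval_cong_BF[OF phi] agr by metis
    qed
  qed
  show "interp Y D ?t" unfolding interp_def
  proof (intro ballI allI impI)
    fix y and \<sigma> \<sigma>' :: "'a \<Rightarrow> bool" assume y: "y \<in> Y" and agD: "\<forall>x\<in>D y. \<sigma> x = \<sigma>' x"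
    have "eval (ext Y s (asg ?gi \<sigma>)) (g (Var y)) = eval (ext Y s (asg ?gi \<sigma>')) (g (Var y))"
    proof (rule eval_cong)
      fix w assume w: "w \<in> vars (g (Var y))"
      then have wY: "w \<in> Y" using gY[OF y] unfolding BF_def by auto
      have "s w (asg ?gi \<sigma>) = s w (asg ?gi \<sigma>')"
      proof -
        have "\<forall>x\<in>D w. asg ?gi \<sigma> x = asg ?gi \<sigma>' x"
        proof
          fix x assume x: "x \<in> D w"
          have xX: "x \<in> X" using DX[OF wY] x by auto
          have "depends Y D (g (Var y)) x" unfolding depends_def using w wY x by auto
          then have "?gi (Var x) \<in> BF (D y)" using dep y xX by blast
          then show "asg ?gi \<sigma> x = asg ?gi \<sigma>' x"
            unfolding asg_def using eval_cong_BF agD by metis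
        qed
        then show ?thesis using s wY unfolding interp_def by blast
      qed
      then show "ext Y s (asg ?gi \<sigma>) w = ext Y s (asg ?gi \<sigma>') w"
        using wY by (simp add: ext_def)
    qed
    then show "?t y \<sigma> = ?t y \<sigma>'" by (simp add: act_def)
  qed
qed

theorem proposition1:
  fixes X Y :: "'v set" and D :: "'v \<Rightarrow> 'v set" and \<phi> :: "'v form"
    and G :: "('v form \<Rightarrow> 'v form) set"
  assumes "prefix X Y D"
    and "\<phi> \<in> BF (X \<union> Y)"
    and "admissible_group X Y D G"
  shows "(\<forall>g\<in>G. \<forall>s. interp Y D s \<longrightarrow>
            dqbf_val Y s (g \<phi>) = dqbf_val Y (act X Y g s) \<phi>)
         \<and> (\<forall>g\<in>G. dqbf_true Y D \<phi> \<longleftrightarrow> dqbf_true Y D (g \<phi>))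
         \<and> (\<forall>g\<in>G. \<forall>s. interp Y D s \<longrightarrow>
            (is_model Y D (g \<phi>) s \<longleftrightarrow> is_model Y D \<phi> (act X Y g s)))"
proof -
  have adm: "\<And>g. g \<in> G \<Longrightarrow> admissible X Y D g" using assms(3) unfolding admissible_group_def by blast
  have inv: "\<And>g. g \<in> G \<Longrightarrow> \<exists>h\<in>G. \<forall>\<phi>\<in>BF (X \<union> Y). h (g \<phi>) = \<phi> \<and> g (h \<phi>) = \<phi>"
    using assms(3) unfolding admissible_group_def by blast
  have M: "\<And>g \<psi> s. g \<in> G \<Longrightarrow> \<psi> \<in> BF (X \<union> Y) \<Longrightarrow> interp Y D s \<Longrightarrow>
      dqbf_val Y s (g \<psi>) = dqbf_val Y (act X Y g s) \<psi> \<and> interp Y D (act X Y g s)"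
  proof -
    fix g \<psi> s assume g: "g \<in> G" and p: "\<psi> \<in> BF (X \<union> Y)" and s: "interp Y D s"
    obtain h where h: "h \<in> G" "\<forall>\<phi>\<in>BF (X \<union> Y). h (g \<phi>) = \<phi> \<and> g (h \<phi>) = \<phi>" using inv[OF g] by blast
    show "dqbf_val Y s (g \<psi>) = dqbf_val Y (act X Y g s) \<psi> \<and> interp Y D (act X Y g s)"
      using main[OF assms(1) adm[OF g] adm[OF h(1)] h(2) s p] by blast
  qed
  have P3: "\<And>g \<psi> s. g \<in> G \<Longrightarrow> \<psi> \<in> BF (X \<union> Y) \<Longrightarrow> interp Y D s \<Longrightarrow>
      is_model Y D (g \<psi>) s \<longleftrightarrow> is_model Y D \<psi> (act X Y g s)"
    using M unfolding is_model_def by blast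
  have P2: "\<And>g. g \<in> G \<Longrightarrow> dqbf_true Y D \<phi> \<longleftrightarrow> dqbf_true Y D (g \<phi>)"
  proof
    fix g assume g: "g \<in> G"
    show "dqbf_true Y D (g \<phi>) \<Longrightarrow> dqbf_true Y D \<phi>"
      using P3[OF g assms(2)] unfolding dqbf_true_def is_model_def by blast
    assume "dqbf_true Y D \<phi>"
    then obtain s where s: "is_model Y D \<phi> s" unfolding dqbf_true_def by blast
    obtain h where h: "h \<in> G" "\<forall>\<phi>\<in>BF (X \<union> Y). h (g \<phi>) = \<phi> \<and> g (h \<phi>) = \<phi>" using inv[OF g] by blast
    have gp: "g \<phi> \<in> BF (X \<union> Y)" using adm[OF g] assms(2) unfolding admissible_def by (meson bij_betw_apply)
    have "h (g \<phi>) = \<phi>" using h(2) assms(2) by blast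
    then have "is_model Y D (g \<phi>) (act X Y h s)"
      using P3[OF h(1) gp] s unfolding is_model_def by metis
    then show "dqbf_true Y D (g \<phi>)" unfolding dqbf_true_def by blast
  qed
  show ?thesis using M[OF _ assms(2)] P2 P3[OF _ assms(2)] by blast
qed

end
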